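(* Let $d\ge1$, $M := e_1e_2^\top + e_2e_1^\top$, $q_{\mathrm{pop}}(w) := w^\top Mw$, $u_\pm := (e_1\pm e_2)/\sqrt2$ and $P_{12} := u_+u_+^\top+u_-u_-^\top$. Let $w_0$ and $w_{T_\star}$ be unit vectors in $\mathbb{R}^d$ such that \[ |q_{\mathrm{pop}}(w_0)|\ge\frac{3}{4d},\qquad \|P_{12}w_0\|_2\le\frac1{\sqrt d},\qquad \|w_{T_\star} - w_0\|_2\le\frac{1}{4\sqrt d}. \] Then $\mathrm{sign}(q_{\mathrm{pop}}(w_{T_\star})) = \mathrm{sign}(q_{\mathrm{pop}}(w_0))$. Moreover, if $s := \mathrm{sign}(q_{\mathrm{pop}}(w_0))$ and $u_s := (e_1 + s e_2)/\sqrt2$, then \[ |\langle w_{T_\star},u_s\rangle| \ge \Big(\frac{\sqrt3}{2}-\frac14\Big)\frac{1}{\sqrt d} \ge \frac{1}{2\sqrt d}. \]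
   Context: In the paper, $w_0$ is the initial inner weight and $w_{T_\star}$ the inner weight at the end of Phase 1; only the stated deterministic conditions are used. *)

theory Defs
  imports "HOL-Analysis.Analysis"
begin

text \<open>Coordinates i1, i2 play the roles of e_1, e_2 (distinct indices of the finite index type).\<close>

definition Mpop :: "'n::finite \<Rightarrow> 'n \<Rightarrow> real^'n^'n" where
  "Mpop i1 i2 = (\<chi> i j. if (i = i1 \<and> j = i2) \<or> (i = i2 \<and> j = i1) then 1 else 0)"

definition qpop :: "'n::finite \<Rightarrow> 'n \<Rightarrow> real^'n \<Rightarrow> real" where
  "qpop i1 i2 w = w \<bullet> (Mpop i1 i2 *v w)"

definition uvec :: "'n::finite \<Rightarrow> 'n \<Rightarrow> real \<Rightarrow> real^'n" where
  "uvec i1 i2 s = (1 / sqrt 2) *\<^sub>R (axis i1 1 + s *\<^sub>R axis i2 1)"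

definition P12 :: "'n::finite \<Rightarrow> 'n \<Rightarrow> real^'n \<Rightarrow> real^'n" where
  "P12 i1 i2 w = (uvec i1 i2 1 \<bullet> w) *\<^sub>R uvec i1 i2 1 + (uvec i1 i2 (-1) \<bullet> w) *\<^sub>R uvec i1 i2 (-1)"

end

theory Submission
  imports Defs
begin

lemma aux1: "(X::real) = 2*Y - Z \<Longrightarrow> 0 \<le> Z \<Longrightarrow> Y \<le> E/16 \<Longrightarrow> X \<le> E/8"
  by linarith

lemma core:
  fixes p m p' m' e :: real
  assumes e: "e > 0" and h1: "p^2 + m^2 \<le> e^2" and h2: "p^2 - m^2 \<ge> 3/4 * e^2"
    and h3: "(p'-p)^2 + (m'-m)^2 \<le> e^2/16"
  shows "p'^2 > m'^2 \<and> \<bar>p'\<bar> \<ge> (sqrt 3 / 2 - 1/4) * e"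
proof -
  define d1 where "d1 = \<bar>p'-p\<bar>"
  define d2 where "d2 = \<bar>m'-m\<bar>"
  have d1sq: "d1^2 = (p'-p)^2" "d2^2 = (m'-m)^2" unfolding d1_def d2_def by simp_all
  have d0: "d1 \<ge> 0" "d2 \<ge> 0" unfolding d1_def d2_def by simp_all
  have d1e: "d1 \<le> e/4"
  proof -
    have "0 \<le> (m'-m)^2" by simp
    moreover have "(e/4)^2 = e^2/16" by (simp add: power_divide)
    ultimately have "d1^2 \<le> (e/4)^2" using h3 d1sq by linarith
    thus ?thesis using e power2_le_imp_le[of d1 "e/4"] by simp
  qed
  have s12: "(d1+d2)^2 \<le> e^2/8"
  proof -
    have id: "(d1+d2)^2 = 2*(d1^2+d2^2) - (d1-d2)^2" by (simp add: algebra_simps power2_eq_square)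
    have "0 \<le> (d1-d2)^2" by simp
    moreover have "d1^2+d2^2 \<le> e^2/16" using h3 d1sq by simp
    ultimately show ?thesis using id aux1 by blast
  qed
  have m2: "m^2 \<le> e^2/8" using h1 h2 by linarith
  have sq3: "sqrt 3 / 2 * e \<le> \<bar>p\<bar>"
  proof -
    have "sqrt 3 / 2 * e = sqrt (3/4 * e^2)" using e by (simp add: real_sqrt_mult real_sqrt_divide)
    also have "\<dots> \<le> sqrt (p^2)" using h2 zero_le_power2[of m] by (intro real_sqrt_le_mono) linarith
    finally show ?thesis by simp
  qed
  have "\<bar>p'\<bar> \<ge> \<bar>p\<bar> - d1" unfolding d1_def by simp
  hence g2: "\<bar>p'\<bar> \<ge> (sqrt 3 / 2 - 1/4) * e" using sq3 d1e by (simp add: algebra_simps)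
  have mm: "\<bar>m\<bar> * (d1+d2) \<le> e^2/8"
  proof -
    have "(\<bar>m\<bar> * (d1+d2))^2 = m^2 * (d1+d2)^2" by (simp add: power_mult_distrib)
    also have "\<dots> \<le> (e^2/8) * (e^2/8)" using m2 s12 by (rule mult_mono) auto
    also have "\<dots> = (e^2/8)^2" by (simp add: power2_eq_square)
    finally have "(\<bar>m\<bar> * (d1+d2))^2 \<le> (e^2/8)^2" .
    thus ?thesis using power2_le_imp_le[of "\<bar>m\<bar> * (d1+d2)" "e^2/8"] by simp
  qed
  have id2: "(\<bar>m\<bar> + (d1+d2))^2 = m^2 + 2*(\<bar>m\<bar> * (d1+d2)) + (d1+d2)^2"
    by (simp add: power2_sum)
  have "e^2 > 0" using e by simp
  hence "(\<bar>m\<bar> + (d1+d2))^2 < p^2" using id2 mm s12 h2 by linarith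
  hence "\<bar>m\<bar> + (d1+d2) < \<bar>p\<bar>" using power2_less_imp_less[of "\<bar>m\<bar> + (d1+d2)" "\<bar>p\<bar>"] by simp
  moreover have "\<bar>p'\<bar> \<ge> \<bar>p\<bar> - d1" "\<bar>m'\<bar> \<le> \<bar>m\<bar> + d2" unfolding d1_def d2_def by auto
  ultimately have "\<bar>m'\<bar> < \<bar>p'\<bar>" by simp
  hence "m'^2 < p'^2" by (metis abs_ge_zero power2_abs power_strict_mono zero_less_numeral)
  thus ?thesis using g2 by simp
qed

lemma Mv_eq:
  assumes "i1 \<noteq> i2"
  shows "Mpop i1 i2 *v w = (w$i2) *\<^sub>R axis i1 1 + (w$i1) *\<^sub>R axis i2 1"
proof -
  have "(Mpop i1 i2 *v w) $ k = ((w$i2) *\<^sub>R axis i1 1 + (w$i1) *\<^sub>R axis i2 1) $ k" for k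
  proof (cases "k = i1")
    case True
    then show ?thesis using assms
      by (simp add: matrix_vector_mult_def Mpop_def axis_def if_distrib[of "\<lambda>x. x * _"] cong: if_cong)
  next
    case F1: False
    show ?thesis
    proof (cases "k = i2")
      case True
      then show ?thesis using assms F1
        by (simp add: matrix_vector_mult_def Mpop_def axis_def if_distrib[of "\<lambda>x. x * _"] cong: if_cong)
    next
      case False
      then show ?thesis using assms F1
        by (simp add: matrix_vector_mult_def Mpop_def axis_def)
    qed
  qed
  thus ?thesis by (simp add: vec_eq_iff)
qed

lemma qpop_eq:
  assumes "i1 \<noteq> i2"
  shows "qpop i1 i2 w = 2 * (w$i1) * (w$i2)"
  unfolding qpop_def Mv_eq[OF assms] by (simp add: inner_add_right inner_axis)

lemma uvec_inner:
  "wT \<bullet> uvec i1 i2 s = (wT$i1 + s * wT$i2) / sqrt 2"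
  unfolding uvec_def by (simp add: inner_add_right inner_axis algebra_simps add_divide_distrib)

lemma uvec_inner':
  "uvec i1 i2 s \<bullet> wT = (wT$i1 + s * wT$i2) / sqrt 2"
  using uvec_inner[of wT i1 i2 s] by (simp add: inner_commute)

lemma P12_eq:
  assumes "i1 \<noteq> i2"
  shows "P12 i1 i2 w = (w$i1) *\<^sub>R axis i1 1 + (w$i2) *\<^sub>R axis i2 1"
proof -
  have "(P12 i1 i2 w) $ k = ((w$i1) *\<^sub>R axis i1 1 + (w$i2) *\<^sub>R axis i2 1) $ k" for k
    using assms unfolding P12_def uvec_inner'
    by (auto simp add: uvec_def axis_def field_simps)
  thus ?thesis by (simp add: vec_eq_iff)
qed

lemma norm_P12:
  assumes "i1 \<noteq> i2"
  shows "(norm (P12 i1 i2 w))^2 = (w$i1)^2 + (w$i2)^2"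
  unfolding P12_eq[OF assms] power2_norm_eq_inner
  using assms by (simp add: inner_add_left inner_add_right inner_axis_axis power2_eq_square)

lemma comp_bound:
  assumes "i1 \<noteq> i2"
  shows "(v$i1)^2 + (v$i2)^2 \<le> (norm (v::real^'n))^2"
proof -
  have "(v$i1)^2 + (v$i2)^2 = (\<Sum>i\<in>{i1,i2}. (v$i)^2)" using assms by simp
  also have "\<dots> \<le> (\<Sum>i\<in>UNIV. (v$i)^2)" by (rule sum_mono2) auto
  also have "\<dots> = (norm v)^2" unfolding power2_norm_eq_inner inner_vec_def by (simp add: power2_eq_square)
  finally show ?thesis .
qed

theorem lemma15:
  fixes w0 wT :: "real^'n" and i1 i2 :: 'n
  defines "d \<equiv> real CARD('n)"
  assumes "i1 \<noteq> i2"
    and "norm w0 = 1" and "norm wT = 1"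
    and "\<bar>qpop i1 i2 w0\<bar> \<ge> 3 / (4 * d)"
    and "norm (P12 i1 i2 w0) \<le> 1 / sqrt d"
    and "norm (wT - w0) \<le> 1 / (4 * sqrt d)"
  shows "sgn (qpop i1 i2 wT) = sgn (qpop i1 i2 w0)
     \<and> \<bar>wT \<bullet> uvec i1 i2 (sgn (qpop i1 i2 w0))\<bar> \<ge> (sqrt 3 / 2 - 1 / 4) * (1 / sqrt d)
     \<and> (sqrt 3 / 2 - 1 / 4) * (1 / sqrt d) \<ge> 1 / (2 * sqrt d)"
proof -
  note ne = assms(2)
  define a where "a = w0$i1"
  define b where "b = w0$i2"
  define x where "x = wT$i1"
  define y where "y = wT$i2"
  define e where "e = 1 / sqrt d"
  define p where "p = (a+b)/sqrt 2"
  define m where "m = (a-b)/sqrt 2"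
  define p' where "p' = (x+y)/sqrt 2"
  define m' where "m' = (x-y)/sqrt 2"
  have d1: "d \<ge> 1" unfolding d_def by (simp add: Suc_leI)
  have e0: "e > 0" unfolding e_def using d1 by simp
  have esq: "e^2 = 1/d" unfolding e_def using d1 by (simp add: power_divide)
  have sq2: "((u::real)/sqrt 2)^2 = u^2/2" for u by (simp add: power_divide)
  have pm1: "p^2 + m^2 = a^2 + b^2" unfolding p_def m_def sq2 by (simp add: power2_sum power2_diff field_simps)
  have pm2: "p^2 - m^2 = qpop i1 i2 w0" unfolding p_def m_def sq2 qpop_eq[OF ne] a_def b_def
    by (simp add: power2_sum power2_diff field_simps)
  have pm2': "p'^2 - m'^2 = qpop i1 i2 wT" unfolding p'_def m'_def sq2 qpop_eq[OF ne] x_def y_def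
    by (simp add: power2_sum power2_diff field_simps)
  have pm3: "(p'-p)^2 + (m'-m)^2 = (x-a)^2 + (y-b)^2"
    unfolding p_def m_def p'_def m'_def diff_divide_distrib[symmetric] sq2
    by (simp add: power2_sum power2_diff field_simps)
  have h1: "p^2 + m^2 \<le> e^2"
  proof -
    have "(norm (P12 i1 i2 w0))^2 \<le> e^2" using assms(6) unfolding e_def
      by (intro power_mono) auto
    thus ?thesis using norm_P12[OF ne, of w0] pm1 a_def b_def by simp
  qed
  have h3: "(p'-p)^2 + (m'-m)^2 \<le> e^2/16"
  proof -
    have "(norm (wT - w0))^2 \<le> (e/4)^2" using assms(7) unfolding e_def
      by (intro power_mono) auto
    moreover have "(e/4)^2 = e^2/16" by (simp add: power_divide)
    moreover have "(x-a)^2 + (y-b)^2 \<le> (norm (wT - w0))^2"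
      using comp_bound[OF ne, of "wT - w0"] unfolding x_def a_def y_def b_def by simp
    ultimately show ?thesis using pm3 by linarith
  qed
  have hq: "\<bar>qpop i1 i2 w0\<bar> \<ge> 3/4 * e^2" using assms(5) esq by simp
  have third: "(sqrt 3 / 2 - 1 / 4) * (1 / sqrt d) \<ge> 1 / (2 * sqrt d)"
  proof -
    have "sqrt (9/4) \<le> sqrt 3" by (rule real_sqrt_le_mono) simp
    moreover have "sqrt (9/4) = 3/2" by (simp add: real_sqrt_divide)
    ultimately have "sqrt 3 / 2 - 1 / 4 \<ge> 1/2" by simp
    moreover have "1 / sqrt d > 0" using d1 by simp
    ultimately have "(sqrt 3 / 2 - 1 / 4) * (1 / sqrt d) \<ge> 1/2 * (1 / sqrt d)"
      by (intro mult_right_mono) auto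
    thus ?thesis by simp
  qed
  show ?thesis
  proof (cases "qpop i1 i2 w0 > 0")
    case True
    have c: "p'^2 > m'^2 \<and> \<bar>p'\<bar> \<ge> (sqrt 3 / 2 - 1/4) * e"
      using core[OF e0 h1 _ h3] hq True pm2 by simp
    have "wT \<bullet> uvec i1 i2 (sgn (qpop i1 i2 w0)) = p'"
      using True unfolding uvec_inner p'_def x_def y_def by simp
    moreover have "sgn (qpop i1 i2 wT) = sgn (qpop i1 i2 w0)" using c pm2' True by simp
    ultimately show ?thesis using c third e_def by simp
  next
    case False
    hence F: "qpop i1 i2 w0 < 0" using hq zero_less_power[OF e0, of 2] by (auto simp: abs_if split: if_splits)
    have c: "m'^2 > p'^2 \<and> \<bar>m'\<bar> \<ge> (sqrt 3 / 2 - 1/4) * e"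
      using core[OF e0 _ _ , of m p m' p'] h1 h3 hq F pm2 by (simp add: add.commute)
    have "wT \<bullet> uvec i1 i2 (sgn (qpop i1 i2 w0)) = m'"
      using F unfolding uvec_inner m'_def x_def y_def by simp
    moreover have "sgn (qpop i1 i2 wT) = sgn (qpop i1 i2 w0)" using c pm2' F by simp
    ultimately show ?thesis using c third e_def by simp
  qed
qed

end
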